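(* Let $E$ be a countable set, $x, y, z \in E$ (not necessarily distinct), and $\sigma$ a random virtual permutation of $E$ whose law is central. Then, almost surely on the event $\{x \sim_\sigma y \sim_\sigma z\}$: $\delta(x,x) = 0$, $\delta(x,y) = -\delta(y,x)$, and $\delta(x,y) + \delta(y,z) = \delta(x,z)$.
   Context: For a set $E$, a virtual permutation is a family $\sigma = (\sigma_I)_{I}$ indexed by finite subsets $I \subset E$, $\sigma_I$ a permutation of $I$, such that for finite $I\subset J$, $\sigma_I(x) = \sigma_J^m(x)$ with $m \geq 1$ minimal such that $\sigma_J^m(x) \in I$. The space of virtual permutations carries the $\sigma$-algebra generated by $\sigma \mapsto \sigma_J$. $x\sim_\sigma y$ iff $x,y$ lie in the same cycle of $\sigma_I$ for some (equivalently every) finite $I \ni x,y$; $\mathcal{C}_\sigma(x)$ is the class of $x$. A law is central if the law of each $\sigma_I$ is conjugation invariant in the symmetric group of $I$. Under a central law, $\lambda(x) \in [0,1]$ denotes the limit (in $L^1$ as $|I|\to\infty$) of $|I \cap \mathcal{C}_\sigma(x)|/|I|$, and $\lambda(x)=\lambda(y)$ a.s. if $x \sim_\sigma y$. For $x \sim_\sigma y$ and finite $I \ni x,y$, $k_I(x,y)$ is the unique integer in $\{0,\dots,|I\cap\mathcal{C}_\sigma(x)|-1\}$ with $\sigma_I^{k_I(x,y)}(x)=y$; $\Delta(x,y)\in[0,1]$ is the limit in $L^1$ of $k_I(x,y)/|I|$ as $|I|\to\infty$ (with $\Delta(x,x)=0$), and $\delta(x,y) \in \mathbb{R}/\lambda(x)\mathbb{Z}$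 is the class of $\Delta(x,y)$ modulo $\lambda(x)$. *)

theory Defs
  imports "HOL-Probability.Probability" "HOL-Combinatorics.Permutations"
begin

text \<open>A virtual permutation of E: a family s I (for finite I \<subseteq> E) of permutations
of I, compatible under the operation of removing elements from cycles.
Values of s at infinite or non-subsets are irrelevant.\<close>
definition virtual_perm :: "'a set \<Rightarrow> ('a set \<Rightarrow> 'a \<Rightarrow> 'a) \<Rightarrow> bool" where
  "virtual_perm E s \<longleftrightarrow>
     (\<forall>I. finite I \<and> I \<subseteq> E \<longrightarrow> s I permutes I) \<and>
     (\<forall>I J. finite J \<and> J \<subseteq> E \<and> I \<subseteq> J \<longrightarrow>
        (\<forall>x\<in>I. s I x = (s J ^^ (LEAST m. m \<ge> 1 \<and> (s J ^^ m) x \<in> I)) x))"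

definition vrel :: "'a set \<Rightarrow> ('a set \<Rightarrow> 'a \<Rightarrow> 'a) \<Rightarrow> 'a \<Rightarrow> 'a \<Rightarrow> bool" where
  "vrel E s x y \<longleftrightarrow>
     (\<exists>I. finite I \<and> I \<subseteq> E \<and> x \<in> I \<and> y \<in> I \<and> (\<exists>n. (s I ^^ n) x = y))"

definition vclass :: "'a set \<Rightarrow> ('a set \<Rightarrow> 'a \<Rightarrow> 'a) \<Rightarrow> 'a \<Rightarrow> 'a set" where
  "vclass E s x = {y \<in> E. vrel E s x y}"

text \<open>k_I(x,y): the unique k in {0..|I \<inter> C(x)|-1} with (s I)^k x = y (meaningful when x \<sim> y).\<close>
definition kI :: "'a set \<Rightarrow> ('a set \<Rightarrow> 'a \<Rightarrow> 'a) \<Rightarrow> 'a set \<Rightarrow> 'a \<Rightarrow> 'a \<Rightarrow> nat" where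
  "kI E s I x y = (THE k. k < card (I \<inter> vclass E s x) \<and> (s I ^^ k) x = y)"

definition random_virtual_perm :: "'w measure \<Rightarrow> 'a set \<Rightarrow> ('w \<Rightarrow> 'a set \<Rightarrow> 'a \<Rightarrow> 'a) \<Rightarrow> bool" where
  "random_virtual_perm M E \<sigma> \<longleftrightarrow>
     (\<forall>\<omega>\<in>space M. virtual_perm E (\<sigma> \<omega>)) \<and>
     (\<forall>J. finite J \<and> J \<subseteq> E \<longrightarrow> (\<lambda>\<omega>. \<sigma> \<omega> J) \<in> measurable M (count_space UNIV))"

definition central_law :: "'w measure \<Rightarrow> 'a set \<Rightarrow> ('w \<Rightarrow> 'a set \<Rightarrow> 'a \<Rightarrow> 'a) \<Rightarrow> bool" where
  "central_law M E \<sigma> \<longleftrightarrow>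
     (\<forall>J \<tau>. finite J \<and> J \<subseteq> E \<and> \<tau> permutes J \<longrightarrow>
        distr M (count_space UNIV) (\<lambda>\<omega>. \<tau> \<circ> \<sigma> \<omega> J \<circ> inv \<tau>)
          = distr M (count_space UNIV) (\<lambda>\<omega>. \<sigma> \<omega> J))"

definition is_lambda :: "'w measure \<Rightarrow> 'a set \<Rightarrow> ('w \<Rightarrow> 'a set \<Rightarrow> 'a \<Rightarrow> 'a) \<Rightarrow> 'a \<Rightarrow> ('w \<Rightarrow> real) \<Rightarrow> bool" where
  "is_lambda M E \<sigma> x L \<longleftrightarrow> L \<in> borel_measurable M \<and>
     (\<forall>\<epsilon>>0. \<exists>N. \<forall>I. finite I \<and> I \<subseteq> E \<and> card I \<ge> N \<longrightarrow>
        (\<integral>\<^sup>+\<omega>. ennreal \<bar>real (card (I \<inter> vclass E (\<sigma> \<omega>) x)) / real (card I) - L \<omega>\<bar> \<partial>M)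
          < ennreal \<epsilon>)"

definition is_Delta :: "'w measure \<Rightarrow> 'a set \<Rightarrow> ('w \<Rightarrow> 'a set \<Rightarrow> 'a \<Rightarrow> 'a) \<Rightarrow> 'a \<Rightarrow> 'a \<Rightarrow> ('w \<Rightarrow> real) \<Rightarrow> bool" where
  "is_Delta M E \<sigma> x y D \<longleftrightarrow> D \<in> borel_measurable M \<and>
     (\<forall>\<epsilon>>0. \<exists>N. \<forall>I. finite I \<and> I \<subseteq> E \<and> x \<in> I \<and> y \<in> I \<and> card I \<ge> N \<longrightarrow>
        (\<integral>\<^sup>+\<omega>. ennreal (indicator {\<omega>. vrel E (\<sigma> \<omega>) x y} \<omega> *
            \<bar>real (kI E (\<sigma> \<omega>) I x y) / real (card I) - D \<omega>\<bar>) \<partial>M) < ennreal \<epsilon>)"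

definition cong_real :: "real \<Rightarrow> real \<Rightarrow> real \<Rightarrow> bool" where
  "cong_real l a b \<longleftrightarrow> (\<exists>k::int. a - b = of_int k * l)"

end

theory Submission
  imports Defs
begin


definition orb :: "('a \<Rightarrow> 'a) \<Rightarrow> 'a \<Rightarrow> 'a set" where
  "orb f a = {y. \<exists>n. (f ^^ n) a = y}"
definition per :: "('a \<Rightarrow> 'a) \<Rightarrow> 'a \<Rightarrow> nat" where
  "per f a = (LEAST q. q > 0 \<and> (f ^^ q) a = a)"

lemma funpow_in_perm: "f permutes I \<Longrightarrow> a \<in> I \<Longrightarrow> (f ^^ n) a \<in> I"
  by (induction n) (auto simp: permutes_in_image)

lemma perm_period_ex:
  assumes "f permutes I" "finite I" "a \<in> I"
  shows "\<exists>q>0. (f ^^ q) a = a"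
proof -
  have inj: "inj f" using assms(1) permutes_inj by blast
  have sub: "range (\<lambda>n. (f ^^ n) a) \<subseteq> I" using funpow_in_perm[OF assms(1,3)] by auto
  have "\<not> inj (\<lambda>n::nat. (f ^^ n) a)"
  proof
    assume "inj (\<lambda>n::nat. (f ^^ n) a)"
    hence "infinite (range (\<lambda>n::nat. (f ^^ n) a))"
      using finite_imageD infinite_UNIV_nat by blast
    thus False using sub assms(2) finite_subset by blast
  qed
  then obtain m n where mn: "m \<noteq> n" "(f ^^ m) a = (f ^^ n) a" unfolding inj_def by auto
  have key: "\<exists>q>0. (f ^^ q) a = a" if "m < n" "(f ^^ m) a = (f ^^ n) a" for m n
  proof -
    have "(f ^^ m) ((f ^^ (n - m)) a) = (f ^^ m) a"
      using that by (metis add_diff_inverse_nat funpow_add less_imp_not_less o_apply)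
    hence "(f ^^ (n - m)) a = a" using inj_fn[OF inj, of m] by (auto dest: injD)
    thus ?thesis using that by (intro exI[of _ "n - m"]) auto
  qed
  show ?thesis using mn key by (metis linorder_neqE_nat)
qed

lemma per_props:
  assumes "f permutes I" "finite I" "a \<in> I"
  shows "per f a > 0" "(f ^^ per f a) a = a"
  using LeastI_ex[OF perm_period_ex[OF assms]] unfolding per_def by auto

lemma funpow_mult_fix: "(f ^^ q) a = a \<Longrightarrow> (f ^^ (q * c)) a = a"
proof (induction c)
  case (Suc c)
  have "(f ^^ (q * Suc c)) a = (f ^^ q) ((f ^^ (q * c)) a)"
    by (simp add: funpow_add)
  thus ?case using Suc by simp
qed simp

lemma funpow_mod: "(f ^^ q) a = a \<Longrightarrow> (f ^^ n) a = (f ^^ (n mod q)) a"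
proof -
  assume h: "(f ^^ q) a = a"
  have e: "(f ^^ (n mod q + q * (n div q))) a = (f ^^ (n mod q)) ((f ^^ (q * (n div q))) a)"
    by (simp only: funpow_add o_apply)
  thus ?thesis using funpow_mult_fix[OF h] by simp
qed

lemma per_dvd:
  assumes "f permutes I" "finite I" "a \<in> I" "(f ^^ n) a = a"
  shows "per f a dvd n"
proof -
  let ?q = "per f a"
  have r: "(f ^^ (n mod ?q)) a = a" using funpow_mod[OF per_props(2)[OF assms(1-3)], of n] assms(4) by simp
  have lt: "n mod ?q < ?q" using per_props(1)[OF assms(1-3)] by simp
  have "n mod ?q = 0"
  proof (rule ccontr)
    assume "n mod ?q \<noteq> 0"
    hence "?q \<le> n mod ?q" using r unfolding per_def by (intro Least_le) auto
    thus False using lt by simp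
  qed
  thus ?thesis by auto
qed

lemma per_inj:
  assumes "f permutes I" "finite I" "a \<in> I" "i < per f a" "j < per f a" "(f ^^ i) a = (f ^^ j) a"
  shows "i = j"
proof -
  have inj: "inj f" using assms(1) permutes_inj by blast
  have main: "i = j" if "i \<le> j" "j < per f a" "(f ^^ i) a = (f ^^ j) a" for i j
  proof -
    obtain d where d: "j = i + d" using \<open>i \<le> j\<close> le_Suc_ex by blast
    have "(f ^^ j) a = (f ^^ i) ((f ^^ d) a)" by (simp add: d funpow_add)
    hence "(f ^^ i) ((f ^^ d) a) = (f ^^ i) a" using that by simp
    hence "(f ^^ d) a = a" using inj_fn[OF inj, of i] by (auto dest: injD)
    hence dv: "per f a dvd d" using per_dvd[OF assms(1-3)] by blast
    have "d < per f a" using d that by simp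
    hence "d = 0" using dv by (auto dest: dvd_imp_le)
    thus ?thesis using d by simp
  qed
  show ?thesis
  proof (cases "i \<le> j")
    case True thus ?thesis using main assms(5,6) by blast
  next
    case False thus ?thesis using main[of j i] assms(4,6) by simp
  qed
qed

lemma orb_eq:
  assumes "f permutes I" "finite I" "a \<in> I"
  shows "orb f a = (\<lambda>k. (f ^^ k) a) ` {..<per f a}"
proof -
  have "(f ^^ n) a \<in> (\<lambda>k. (f ^^ k) a) ` {..<per f a}" for n
  proof -
    have e: "(f ^^ n) a = (f ^^ (n mod per f a)) a" using funpow_mod[OF per_props(2)[OF assms]] .
    have "n mod per f a < per f a" using per_props(1)[OF assms] by simp
    thus ?thesis unfolding e by blast
  qed
  thus ?thesis unfolding orb_def by auto
qed

lemma card_orb: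
  assumes "f permutes I" "finite I" "a \<in> I"
  shows "card (orb f a) = per f a"
proof -
  have "inj_on (\<lambda>k. (f ^^ k) a) {..<per f a}"
    using per_inj[OF assms] by (auto simp: inj_on_def)
  thus ?thesis using orb_eq[OF assms] by (simp add: card_image)
qed

lemma orb_sub: assumes "f permutes I" "a \<in> I" shows "orb f a \<subseteq> I"
proof
  fix y assume "y \<in> orb f a"
  then obtain n where "(f ^^ n) a = y" by (auto simp: orb_def)
  thus "y \<in> I" using funpow_in_perm[OF assms, of n] by simp
qed

lemma orb_trans:
  assumes "b \<in> orb f a" shows "orb f b \<subseteq> orb f a"
proof
  fix y assume "y \<in> orb f b"
  then obtain m where m: "(f ^^ m) b = y" by (auto simp: orb_def)
  obtain n where n: "(f ^^ n) a = b" using assms by (auto simp: orb_def)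
  have "(f ^^ (m + n)) a = y" using m n by (simp add: funpow_add)
  thus "y \<in> orb f a" by (auto simp: orb_def)
qed

lemma orb_same:
  assumes "f permutes I" "finite I" "a \<in> I" "b \<in> orb f a"
  shows "orb f b = orb f a"
proof -
  obtain n where n: "(f ^^ n) a = b" using assms(4) unfolding orb_def by auto
  let ?q = "per f a"
  have q0: "?q > 0" using per_props(1)[OF assms(1-3)] .
  obtain c where c: "?q * n = n + c" using q0 le_Suc_ex[of n "?q * n"] by auto
  have "(f ^^ c) b = (f ^^ (c + n)) a" using n by (simp add: funpow_add)
  also have "c + n = ?q * n" using c by simp
  also have "(f ^^ (?q * n)) a = a" using funpow_mult_fix[OF per_props(2)[OF assms(1-3)]] by simp
  finally have "a \<in> orb f b" unfolding orb_def by auto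
  thus ?thesis using orb_trans[OF assms(4)] orb_trans[of a f b] by blast
qed

lemma vp_perm: "virtual_perm E s \<Longrightarrow> finite I \<Longrightarrow> I \<subseteq> E \<Longrightarrow> s I permutes I"
  unfolding virtual_perm_def by blast

lemma vp_compat:
  assumes "virtual_perm E s" "finite J" "J \<subseteq> E" "I \<subseteq> J" "b \<in> I"
  shows "s I b = (s J ^^ (LEAST m. m \<ge> 1 \<and> (s J ^^ m) b \<in> I)) b"
  using assms unfolding virtual_perm_def by blast

lemma vp_up:
  assumes vp: "virtual_perm E s" and J: "finite J" "J \<subseteq> E" "I \<subseteq> J" and a: "a \<in> I"
  shows "\<exists>m. (s I ^^ n) a = (s J ^^ m) a"
proof (induction n)
  case 0 show ?case by (auto intro: exI[of _ 0])
next
  case (Suc n)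
  then obtain m where m: "(s I ^^ n) a = (s J ^^ m) a" by blast
  have I: "finite I" "I \<subseteq> E" using J finite_subset by auto
  have bI: "(s I ^^ n) a \<in> I" using funpow_in_perm[OF vp_perm[OF vp I] a] .
  define L where "L = (LEAST m. m \<ge> 1 \<and> (s J ^^ m) ((s I ^^ n) a) \<in> I)"
  have "s I ((s I ^^ n) a) = (s J ^^ L) ((s I ^^ n) a)"
    unfolding L_def by (rule vp_compat[OF vp J bI])
  hence "(s I ^^ Suc n) a = (s J ^^ (L + m)) a" using m by (simp add: funpow_add)
  thus ?case by blast
qed

lemma vp_down:
  assumes vp: "virtual_perm E s" and J: "finite J" "J \<subseteq> E" "I \<subseteq> J"
  shows "a \<in> I \<Longrightarrow> b \<in> I \<Longrightarrow> (s J ^^ n) a = b \<Longrightarrow> \<exists>k. (s I ^^ k) a = b"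
proof (induction n arbitrary: a rule: less_induct)
  case (less n a)
  have aI: "a \<in> I" and bI: "b \<in> I" and eq: "(s J ^^ n) a = b" by fact+
  show ?case
  proof (cases "n = 0")
    case True
    hence "(s I ^^ 0) a = b" using eq by simp
    thus ?thesis by blast
  next
    case False
    have I: "finite I" "I \<subseteq> E" using J finite_subset by auto
    let ?P = "\<lambda>m. m \<ge> 1 \<and> (s J ^^ m) a \<in> I"
    define L where "L = (LEAST m. ?P m)"
    have Pn: "?P n" using False eq bI by simp
    have PL: "?P L" unfolding L_def by (rule LeastI[of ?P, OF Pn])
    have Ln: "L \<le> n" unfolding L_def by (rule Least_le[of ?P, OF Pn])
    have sI: "s I a = (s J ^^ L) a"
      unfolding L_def by (rule vp_compat[OF vp J aI])
    have "(s J ^^ (n - L)) (s I a) = (s J ^^ (n - L + L)) a" unfolding sI funpow_add by simp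
    also have "n - L + L = n" using Ln by simp
    finally have e: "(s J ^^ (n - L)) (s I a) = b" using eq by simp
    have sIa: "s I a \<in> I" using vp_perm[OF vp I] aI by (simp add: permutes_in_image)
    have lt: "n - L < n" using PL False by simp
    obtain k where "(s I ^^ k) (s I a) = b"
      using less(1)[OF lt sIa bI e] by blast
    hence "(s I ^^ Suc k) a = b" by (simp only: funpow_Suc_right o_apply)
    thus ?thesis by blast
  qed
qed

lemma vrel_iff:
  assumes vp: "virtual_perm E s" and I: "finite I" "I \<subseteq> E" and ab: "a \<in> I" "b \<in> I"
  shows "vrel E s a b \<longleftrightarrow> (\<exists>n. (s I ^^ n) a = b)"
proof
  assume "vrel E s a b"
  then obtain I' n where I': "finite I'" "I' \<subseteq> E" "a \<in> I'" "b \<in> I'" "(s I' ^^ n) a = b"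
    unfolding vrel_def by blast
  obtain m where "(s I' ^^ n) a = (s (I \<union> I') ^^ m) a"
    using vp_up[OF vp _ _ _ I'(3), of "I \<union> I'" n] I I' by auto
  thus "\<exists>n. (s I ^^ n) a = b"
    using vp_down[OF vp _ _ _ ab, of "I \<union> I'" m] I I' by auto
next
  assume "\<exists>n. (s I ^^ n) a = b"
  thus "vrel E s a b" unfolding vrel_def using I ab by blast
qed

lemma vclass_Int:
  assumes vp: "virtual_perm E s" and I: "finite I" "I \<subseteq> E" and a: "a \<in> I"
  shows "I \<inter> vclass E s a = orb (s I) a"
proof -
  have "orb (s I) a \<subseteq> I" using orb_sub[OF vp_perm[OF vp I] a] .
  thus ?thesis unfolding vclass_def using vrel_iff[OF vp I a] I by (auto simp: orb_def)
qed

lemma kI_alt: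
  assumes vp: "virtual_perm E s" and I: "finite I" "I \<subseteq> E" and a: "a \<in> I"
  shows "kI E s I a b = (THE k. k < card (orb (s I) a) \<and> (s I ^^ k) a = b)"
  unfolding kI_def vclass_Int[OF assms] ..

lemma kI_eq:
  assumes vp: "virtual_perm E s" and I: "finite I" "I \<subseteq> E" and a: "a \<in> I"
    and k: "k < per (s I) a" "(s I ^^ k) a = b"
  shows "kI E s I a b = k"
proof -
  have P: "s I permutes I" using vp_perm[OF vp I] .
  show ?thesis unfolding kI_alt[OF assms(1-4)] card_orb[OF P I(1) a]
    using k per_inj[OF P I(1) a] by (intro the_equality) auto
qed




lemma kI_prop:
  assumes vp: "virtual_perm E s" and I: "finite I" "I \<subseteq> E" and a: "a \<in> I"
    and b: "b \<in> orb (s I) a"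
  shows "kI E s I a b < per (s I) a" "(s I ^^ kI E s I a b) a = b"
proof -
  have P: "s I permutes I" using vp_perm[OF vp I] .
  obtain n where n: "(s I ^^ n) a = b" using b by (auto simp: orb_def)
  have e: "(s I ^^ (n mod per (s I) a)) a = b"
    using funpow_mod[OF per_props(2)[OF P I(1) a], of n] n by simp
  have lt: "n mod per (s I) a < per (s I) a" using per_props(1)[OF P I(1) a] by simp
  have "kI E s I a b = n mod per (s I) a" by (rule kI_eq[OF vp I a lt e])
  thus "kI E s I a b < per (s I) a" "(s I ^^ kI E s I a b) a = b" using lt e by simp_all
qed

lemma triple:
  assumes vp: "virtual_perm E s" and I: "finite I" "I \<subseteq> E"
    and xyz: "x \<in> I" "y \<in> I" "z \<in> I"
    and r: "vrel E s x y" "vrel E s y z"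
  shows "vrel E s x x" "vrel E s y x" "vrel E s x z" "kI E s I x x = 0"
    "kI E s I x y + kI E s I y x = 0 \<or> kI E s I x y + kI E s I y x = card (I \<inter> vclass E s x)"
    "kI E s I x y + kI E s I y z = kI E s I x z \<or>
     kI E s I x y + kI E s I y z = kI E s I x z + card (I \<inter> vclass E s x)"
proof -
  define f where "f = s I"
  have P: "f permutes I" unfolding f_def using vp_perm[OF vp I] .
  define q where "q = per f x"
  have yo: "y \<in> orb f x" using vrel_iff[OF vp I xyz(1,2)] r(1) by (auto simp: orb_def f_def)
  have zoy: "z \<in> orb f y" using vrel_iff[OF vp I xyz(2,3)] r(2) by (auto simp: orb_def f_def)
  have oyx: "orb f y = orb f x" by (rule orb_same[OF P I(1) xyz(1) yo])
  have zo: "z \<in> orb f x" using zoy oyx by simp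
  have xo: "x \<in> orb f x" unfolding orb_def by (auto intro: exI[of _ 0])
  have xoy: "x \<in> orb f y" using xo oyx by simp
  show "vrel E s x x" using vrel_iff[OF vp I xyz(1,1)] xo by (auto simp: orb_def f_def)
  show "vrel E s y x" using vrel_iff[OF vp I xyz(2,1)] xoy by (auto simp: orb_def f_def)
  show "vrel E s x z" using vrel_iff[OF vp I xyz(1,3)] zo by (auto simp: orb_def f_def)
  have qy: "per f y = q" unfolding q_def
    using card_orb[OF P I(1) xyz(1)] card_orb[OF P I(1) xyz(2)] oyx by simp
  have C: "card (I \<inter> vclass E s x) = q"
    unfolding vclass_Int[OF vp I xyz(1)] q_def f_def[symmetric] by (rule card_orb[OF P I(1) xyz(1)])
  have q0: "q > 0" unfolding q_def by (rule per_props(1)[OF P I(1) xyz(1)])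
  show "kI E s I x x = 0" using kI_eq[OF vp I xyz(1), of 0 x] q0 by (simp add: q_def f_def)
  define k1 where "k1 = kI E s I x y"
  define k2 where "k2 = kI E s I y x"
  define k3 where "k3 = kI E s I y z"
  define k4 where "k4 = kI E s I x z"
  have k1: "k1 < q" "(f ^^ k1) x = y" using kI_prop[OF vp I xyz(1), of y] yo unfolding k1_def q_def f_def by auto
  have k2: "k2 < q" "(f ^^ k2) y = x" using kI_prop[OF vp I xyz(2), of x] xoy qy unfolding k2_def q_def f_def by auto
  have k3: "k3 < q" "(f ^^ k3) y = z" using kI_prop[OF vp I xyz(2), of z] zoy qy unfolding k3_def q_def f_def by auto
  have k4: "k4 < q" "(f ^^ k4) x = z" using kI_prop[OF vp I xyz(1), of z] zo unfolding k4_def q_def f_def by auto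
  have "(f ^^ (k2 + k1)) x = x" using k1 k2 by (simp add: funpow_add)
  hence "q dvd (k2 + k1)" unfolding q_def by (rule per_dvd[OF P I(1) xyz(1)])
  then obtain c where c: "k2 + k1 = q * c" by blast
  have "c < 2" using c k1 k2 by (metis add_less_mono mult_2_right mult_less_cancel1 not_less_eq zero_less_Suc) 
  hence "c = 0 \<or> c = 1" by auto
  thus "kI E s I x y + kI E s I y x = 0 \<or> kI E s I x y + kI E s I y x = card (I \<inter> vclass E s x)"
    using c C unfolding k1_def[symmetric] k2_def[symmetric] by auto
  have "(f ^^ (k3 + k1)) x = z" using k1 k3 by (simp add: funpow_add)
  hence "(f ^^ ((k3 + k1) mod q)) x = (f ^^ k4) x"
    using funpow_mod[OF per_props(2)[OF P I(1) xyz(1)], of "k3 + k1"] k4 unfolding q_def by simp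
  hence m: "(k3 + k1) mod q = k4" using per_inj[OF P I(1) xyz(1)] k4(1) q0 unfolding q_def by simp
  have "k3 + k1 = k4 \<or> k3 + k1 = k4 + q"
  proof (cases "k3 + k1 < q")
    case True thus ?thesis using m by simp
  next
    case False
    hence "(k3 + k1) mod q = k3 + k1 - q" using k1 k3 by (simp add: le_mod_geq)
    thus ?thesis using m False by simp
  qed
  thus "kI E s I x y + kI E s I y z = kI E s I x z \<or>
     kI E s I x y + kI E s I y z = kI E s I x z + card (I \<inter> vclass E s x)"
    using C unfolding k1_def[symmetric] k3_def[symmetric] k4_def[symmetric] by auto
qed




lemma meas_G:
  assumes "(\<lambda>\<omega>. \<sigma> \<omega> J) \<in> measurable M (count_space UNIV)"
  shows "(\<lambda>\<omega>. (G (\<sigma> \<omega> J) :: real)) \<in> borel_measurable M"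
  by (rule measurable_compose[OF assms]) simp

lemma squeeze0:
  fixes e t :: "nat \<Rightarrow> real"
  assumes "\<And>k. 0 \<le> e k" "\<And>k. e k \<le> t k" "t \<longlonglongrightarrow> 0"
  shows "e \<longlonglongrightarrow> 0"
  by (rule tendsto_sandwich[of "\<lambda>_. 0" e sequentially t]) (use assms in auto)

lemma abs_lim:
  fixes a :: "nat \<Rightarrow> real"
  assumes "(\<lambda>k. \<bar>a k - L\<bar>) \<longlonglongrightarrow> 0"
  shows "a \<longlonglongrightarrow> L"
  using assms by (simp add: tendsto_rabs_zero_iff LIM_zero_iff)

lemma prod_lim_zero:
  fixes s a :: "nat \<Rightarrow> real"
  assumes "s \<longlonglongrightarrow> S" "a \<longlonglongrightarrow> L" "\<And>k. s k = 0 \<or> s k = a k"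
  shows "\<exists>c::int. S = of_int c * L"
proof -
  have "(\<lambda>k. s k * (s k - a k)) \<longlonglongrightarrow> S * (S - L)"
    using assms by (intro tendsto_intros)
  moreover have "(\<lambda>k. s k * (s k - a k)) = (\<lambda>k. 0)"
    using assms(3) by (auto intro!: ext)
  ultimately have "S * (S - L) = 0" using LIMSEQ_unique tendsto_const by metis
  hence "S = 0 \<or> S = L" by auto
  thus ?thesis by (metis mult_zero_left mult_1 of_int_0 of_int_1)
qed




theorem proposition3p11:
  fixes M :: "'w measure" and E :: "'a set"
    and \<sigma> :: "'w \<Rightarrow> 'a set \<Rightarrow> 'a \<Rightarrow> 'a"
    and lam :: "'a \<Rightarrow> 'w \<Rightarrow> real" and Delta :: "'a \<Rightarrow> 'a \<Rightarrow> 'w \<Rightarrow> real"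
    and x y z :: 'a
  assumes "prob_space M"
    and "countable E" and "infinite E"
    and "x \<in> E" and "y \<in> E" and "z \<in> E"
    and "random_virtual_perm M E \<sigma>"
    and "central_law M E \<sigma>"
    and "\<And>a. a \<in> E \<Longrightarrow> is_lambda M E \<sigma> a (lam a)"
    and "\<And>a b. a \<in> E \<Longrightarrow> b \<in> E \<Longrightarrow> is_Delta M E \<sigma> a b (Delta a b)"
  shows "AE \<omega> in M. vrel E (\<sigma> \<omega>) x y \<and> vrel E (\<sigma> \<omega>) y z \<longrightarrow>
           cong_real (lam x \<omega>) (Delta x x \<omega>) 0 \<and>
           cong_real (lam x \<omega>) (Delta x y \<omega>) (- Delta y x \<omega>) \<and>
           cong_real (lam x \<omega>) (Delta x y \<omega> + Delta y z \<omega>) (Delta x z \<omega>)"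
proof -
  interpret P: prob_space M by fact
  have vp: "\<And>\<omega>. \<omega> \<in> space M \<Longrightarrow> virtual_perm E (\<sigma> \<omega>)"
   and smeas: "\<And>J. finite J \<Longrightarrow> J \<subseteq> E \<Longrightarrow> (\<lambda>\<omega>. \<sigma> \<omega> J) \<in> measurable M (count_space UNIV)"
    using assms(7) unfolding random_virtual_perm_def by auto
  define errL where "errL I \<omega> = \<bar>real (card (I \<inter> vclass E (\<sigma> \<omega>) x)) / real (card I) - lam x \<omega>\<bar>"
    for I \<omega>
  define errD where "errD a b I \<omega> = indicator {\<omega>. vrel E (\<sigma> \<omega>) a b} \<omega> *
            \<bar>real (kI E (\<sigma> \<omega>) I a b) / real (card I) - Delta a b \<omega>\<bar>" for a b I \<omega>
  define ps where "ps = [(x,x),(x,y),(y,x),(y,z),(x,z)]"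
  have psE: "fst (ps ! i) \<in> {x,y,z} \<and> snd (ps ! i) \<in> {x,y,z}" if "i < 5" for i
  proof -
    have "ps ! i \<in> set ps" by (rule nth_mem) (use that in \<open>simp add: ps_def\<close>)
    thus ?thesis by (auto simp: ps_def)
  qed
  have lamm: "lam x \<in> borel_measurable M" using assms(9)[OF assms(4)] unfolding is_lambda_def by auto
  have Dm: "Delta a b \<in> borel_measurable M" if "a \<in> E" "b \<in> E" for a b
    using assms(10)[OF that] unfolding is_Delta_def by auto
  have "\<forall>\<epsilon>. \<exists>N. \<epsilon> > 0 \<longrightarrow> (\<forall>I. finite I \<and> I \<subseteq> E \<and> card I \<ge> N \<longrightarrow>
          (\<integral>\<^sup>+\<omega>. ennreal (errL I \<omega>) \<partial>M) < ennreal \<epsilon>)"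
    using assms(9)[OF assms(4)] unfolding is_lambda_def errL_def by auto
  from choice[OF this] obtain NL where NL': "\<forall>\<epsilon>. \<epsilon> > 0 \<longrightarrow> (\<forall>I. finite I \<and> I \<subseteq> E \<and> card I \<ge> NL \<epsilon> \<longrightarrow>
          (\<integral>\<^sup>+\<omega>. ennreal (errL I \<omega>) \<partial>M) < ennreal \<epsilon>)" by blast
  have NL: "\<And>\<epsilon> I. \<epsilon> > 0 \<Longrightarrow> finite I \<Longrightarrow> I \<subseteq> E \<Longrightarrow> card I \<ge> NL \<epsilon> \<Longrightarrow>
          (\<integral>\<^sup>+\<omega>. ennreal (errL I \<omega>) \<partial>M) < ennreal \<epsilon>"
    using NL' by blast
  have NDex: "\<forall>p. \<exists>N. (fst p \<in> E \<and> snd p \<in> E) \<longrightarrow> (\<forall>\<epsilon>>0. \<forall>I. finite I \<and> I \<subseteq> E \<and> fst p \<in> I \<and> snd p \<in> I \<and> card I \<ge> N \<epsilon> \<longrightarrow>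
          (\<integral>\<^sup>+\<omega>. ennreal (errD (fst p) (snd p) I \<omega>) \<partial>M) < ennreal \<epsilon>)"
  proof
    fix p :: "'a \<times> 'a"
    show "\<exists>N. (fst p \<in> E \<and> snd p \<in> E) \<longrightarrow> (\<forall>\<epsilon>>0. \<forall>I. finite I \<and> I \<subseteq> E \<and> fst p \<in> I \<and> snd p \<in> I \<and> card I \<ge> N \<epsilon> \<longrightarrow>
          (\<integral>\<^sup>+\<omega>. ennreal (errD (fst p) (snd p) I \<omega>) \<partial>M) < ennreal \<epsilon>)"
    proof (cases "fst p \<in> E \<and> snd p \<in> E")
      case True
      have "\<forall>\<epsilon>. \<exists>N. \<epsilon> > 0 \<longrightarrow> (\<forall>I. finite I \<and> I \<subseteq> E \<and> fst p \<in> I \<and> snd p \<in> I \<and> card I \<ge> N \<longrightarrow>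
          (\<integral>\<^sup>+\<omega>. ennreal (errD (fst p) (snd p) I \<omega>) \<partial>M) < ennreal \<epsilon>)"
        using assms(10)[of "fst p" "snd p"] True unfolding is_Delta_def errD_def by auto
      from choice[OF this] obtain N where "\<forall>\<epsilon>. \<epsilon> > 0 \<longrightarrow> (\<forall>I. finite I \<and> I \<subseteq> E \<and> fst p \<in> I \<and> snd p \<in> I \<and> card I \<ge> N \<epsilon> \<longrightarrow>
          (\<integral>\<^sup>+\<omega>. ennreal (errD (fst p) (snd p) I \<omega>) \<partial>M) < ennreal \<epsilon>)" by blast
      thus ?thesis by blast
    qed auto
  qed
  then obtain ND where ND: "\<And>p \<epsilon> I. fst p \<in> E \<Longrightarrow> snd p \<in> E \<Longrightarrow> \<epsilon> > 0 \<Longrightarrow> finite I \<Longrightarrow> I \<subseteq> E \<Longrightarrow>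
          fst p \<in> I \<Longrightarrow> snd p \<in> I \<Longrightarrow> card I \<ge> ND p \<epsilon> \<Longrightarrow>
          (\<integral>\<^sup>+\<omega>. ennreal (errD (fst p) (snd p) I \<omega>) \<partial>M) < ennreal \<epsilon>"
  proof -
    from choice[OF NDex] obtain N where N: "\<forall>p. (fst p \<in> E \<and> snd p \<in> E) \<longrightarrow> (\<forall>\<epsilon>>0. \<forall>I. finite I \<and> I \<subseteq> E \<and> fst p \<in> I \<and> snd p \<in> I \<and> card I \<ge> N p \<epsilon> \<longrightarrow>
          (\<integral>\<^sup>+\<omega>. ennreal (errD (fst p) (snd p) I \<omega>) \<partial>M) < ennreal \<epsilon>)" by blast
    show ?thesis using that[of N] N by blast
  qed
  define eps :: "nat \<Rightarrow> real" where "eps k = (1/2)^k" for k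
  have eps0: "eps k > 0" for k by (simp add: eps_def)
  define Nk where "Nk k = max (NL (eps k)) (Max ((\<lambda>i. ND (ps ! i) (eps k)) ` {..<5}))" for k
  have Isex: "\<forall>k. \<exists>I. finite I \<and> I \<subseteq> E \<and> x \<in> I \<and> y \<in> I \<and> z \<in> I \<and> Nk k \<le> card I"
  proof
    fix k
    obtain B where B: "finite B" "card B = Nk k" "B \<subseteq> E"
      using infinite_arbitrarily_large[OF assms(3)] by blast
    have "card B \<le> card (B \<union> {x,y,z})" using B by (intro card_mono) auto
    thus "\<exists>I. finite I \<and> I \<subseteq> E \<and> x \<in> I \<and> y \<in> I \<and> z \<in> I \<and> Nk k \<le> card I"
      using B assms(4-6) by (intro exI[of _ "B \<union> {x,y,z}"]) auto
  qed
  then obtain Is where Is: "\<And>k. finite (Is k)" "\<And>k. Is k \<subseteq> E" "\<And>k. x \<in> Is k"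
    "\<And>k. y \<in> Is k" "\<And>k. z \<in> Is k" "\<And>k. Nk k \<le> card (Is k)"
  proof -
    from choice[OF Isex] obtain Is where "\<forall>k. finite (Is k) \<and> Is k \<subseteq> E \<and> x \<in> Is k \<and> y \<in> Is k \<and> z \<in> Is k \<and> Nk k \<le> card (Is k)" by blast
    thus ?thesis using that[of Is] by blast
  qed
  have psI: "fst (ps ! i) \<in> Is k" "snd (ps ! i) \<in> Is k" "fst (ps ! i) \<in> E" "snd (ps ! i) \<in> E"
    if "i < 5" for i k
    using psE[OF that] Is assms(4-6) by auto
  have intL: "(\<integral>\<^sup>+\<omega>. ennreal (errL (Is k) \<omega>) \<partial>M) < ennreal (eps k)" for k
    using NL[OF eps0 Is(1,2)] Is(6)[of k] unfolding Nk_def by auto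
  have intD: "(\<integral>\<^sup>+\<omega>. ennreal (errD (fst (ps ! i)) (snd (ps ! i)) (Is k) \<omega>) \<partial>M) < ennreal (eps k)"
    if "i < 5" for i k
  proof -
    have "ND (ps ! i) (eps k) \<le> Max ((\<lambda>i. ND (ps ! i) (eps k)) ` {..<5})"
      using that by (intro Max_ge) auto
    hence "ND (ps ! i) (eps k) \<le> card (Is k)" using Is(6)[of k] unfolding Nk_def by auto
    thus ?thesis using ND[OF psI(3,4)[OF that] eps0 Is(1,2) psI(1,2)[OF that]] by auto
  qed
  have mL: "errL (Is k) \<in> borel_measurable M" for k
  proof -
    let ?G = "\<lambda>f. real (card (orb f x)) / real (card (Is k))"
    have h: "(\<lambda>\<omega>. ?G (\<sigma> \<omega> (Is k))) \<in> borel_measurable M" by (rule measurable_compose[OF smeas[OF Is(1,2)]]) simp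
    have "(\<lambda>\<omega>. \<bar>?G (\<sigma> \<omega> (Is k)) - lam x \<omega>\<bar>) \<in> borel_measurable M"
      by (intro borel_measurable_abs borel_measurable_diff h lamm)
    moreover have "errL (Is k) \<omega> = \<bar>?G (\<sigma> \<omega> (Is k)) - lam x \<omega>\<bar>" if "\<omega> \<in> space M" for \<omega>
      unfolding errL_def vclass_Int[OF vp[OF that] Is(1,2,3)] ..
    ultimately show ?thesis by (rule measurable_cong[THEN iffD2, rotated])
  qed
  have mD: "errD (fst (ps ! i)) (snd (ps ! i)) (Is k) \<in> borel_measurable M" if "i < 5" for i k
  proof -
    define a where "a = fst (ps ! i)"
    define b where "b = snd (ps ! i)"
    have aI: "a \<in> Is k" "b \<in> Is k" "a \<in> E" "b \<in> E" using psI[OF that] unfolding a_def b_def by auto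
    let ?G1 = "\<lambda>f. if \<exists>n. (f ^^ n) a = b then 1 else (0::real)"
    let ?G2 = "\<lambda>f. real (THE k. k < card (orb f a) \<and> (f ^^ k) a = b) / real (card (Is k))"
    have h1: "(\<lambda>\<omega>. ?G1 (\<sigma> \<omega> (Is k))) \<in> borel_measurable M" by (rule measurable_compose[OF smeas[OF Is(1,2)]]) simp
    have h2: "(\<lambda>\<omega>. ?G2 (\<sigma> \<omega> (Is k))) \<in> borel_measurable M" by (rule measurable_compose[OF smeas[OF Is(1,2)]]) simp
    have h3: "Delta a b \<in> borel_measurable M" using Dm aI by auto
    have "(\<lambda>\<omega>. ?G1 (\<sigma> \<omega> (Is k)) * \<bar>?G2 (\<sigma> \<omega> (Is k)) - Delta a b \<omega>\<bar>) \<in> borel_measurable M"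
      by (intro borel_measurable_times borel_measurable_abs borel_measurable_diff h1 h2 h3)
    moreover have "errD a b (Is k) \<omega> = ?G1 (\<sigma> \<omega> (Is k)) * \<bar>?G2 (\<sigma> \<omega> (Is k)) - Delta a b \<omega>\<bar>"
      if "\<omega> \<in> space M" for \<omega>
      unfolding errD_def kI_alt[OF vp[OF that] Is(1,2) aI(1)]
      using vrel_iff[OF vp[OF that] Is(1,2) aI(1,2)] by (simp add: indicator_def)
    ultimately have "errD a b (Is k) \<in> borel_measurable M" by (rule measurable_cong[THEN iffD2, rotated])
    thus ?thesis unfolding a_def b_def .
  qed
  have Lnn: "0 \<le> errL I \<omega>" for I \<omega> unfolding errL_def by simp
  have Dnn: "0 \<le> errD a b I \<omega>" for a b I \<omega> unfolding errD_def by simp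
  define tot where "tot k \<omega> = errL (Is k) \<omega> + (\<Sum>i<5. errD (fst (ps ! i)) (snd (ps ! i)) (Is k) \<omega>)" for k \<omega>
  have totnn: "0 \<le> tot k \<omega>" for k \<omega> unfolding tot_def using Lnn Dnn by (simp add: sum_nonneg add_nonneg_nonneg)
  have mLe: "(\<lambda>\<omega>. ennreal (errL (Is k) \<omega>)) \<in> borel_measurable M" for k using mL[of k] by measurable
  have mDe: "(\<lambda>\<omega>. ennreal (errD (fst (ps ! i)) (snd (ps ! i)) (Is k) \<omega>)) \<in> borel_measurable M"
    if "i < 5" for i k using mD[OF that, of k] by measurable
  have ennsplit: "ennreal (tot k \<omega>) = ennreal (errL (Is k) \<omega>) +
       (\<Sum>i<5. ennreal (errD (fst (ps ! i)) (snd (ps ! i)) (Is k) \<omega>))" for k \<omega>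
    unfolding tot_def using Lnn Dnn by (simp add: sum_nonneg)
  have mtot: "(\<lambda>\<omega>. ennreal (tot k \<omega>)) \<in> borel_measurable M" for k
  proof -
    have "(\<lambda>\<omega>. ennreal (errL (Is k) \<omega>) +
       (\<Sum>i<5. ennreal (errD (fst (ps ! i)) (snd (ps ! i)) (Is k) \<omega>))) \<in> borel_measurable M"
      using mLe[of k] mDe by (intro borel_measurable_add borel_measurable_sum) auto
    thus ?thesis unfolding ennsplit .
  qed
  have inttot: "(\<integral>\<^sup>+\<omega>. ennreal (tot k \<omega>) \<partial>M) \<le> ennreal (6 * eps k)" for k
  proof -
    have "(\<integral>\<^sup>+\<omega>. ennreal (tot k \<omega>) \<partial>M) = (\<integral>\<^sup>+\<omega>. ennreal (errL (Is k) \<omega>) \<partial>M) +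
       (\<Sum>i<5. \<integral>\<^sup>+\<omega>. ennreal (errD (fst (ps ! i)) (snd (ps ! i)) (Is k) \<omega>) \<partial>M)"
    proof -
      have ms: "(\<lambda>\<omega>. \<Sum>i<5. ennreal (errD (fst (ps ! i)) (snd (ps ! i)) (Is k) \<omega>)) \<in> borel_measurable M"
        by (rule borel_measurable_sum) (simp add: mDe)
      have s2: "(\<integral>\<^sup>+\<omega>. (\<Sum>i<5. ennreal (errD (fst (ps ! i)) (snd (ps ! i)) (Is k) \<omega>)) \<partial>M) =
          (\<Sum>i<5. \<integral>\<^sup>+\<omega>. ennreal (errD (fst (ps ! i)) (snd (ps ! i)) (Is k) \<omega>) \<partial>M)"
        by (rule nn_integral_sum) (simp add: mDe)
      show ?thesis unfolding ennsplit nn_integral_add[OF mLe ms] s2 ..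
    qed
    also have "\<dots> \<le> ennreal (eps k) + (\<Sum>i<(5::nat). ennreal (eps k))"
      using intL[of k] intD by (intro add_mono sum_mono) (auto intro: less_imp_le)
    also have "\<dots> = ennreal (eps k) + 5 * ennreal (eps k)" by simp
    also have "\<dots> = (1 + 5) * ennreal (eps k)" by (simp only: distrib_right mult_1)
    also have "(1 + 5 :: ennreal) = ennreal 6" by simp
    also have "ennreal 6 * ennreal (eps k) = ennreal (6 * eps k)" using eps0[of k] by (simp add: ennreal_mult)
    finally show ?thesis .
  qed
  define g where "g \<omega> = (\<Sum>k. ennreal (tot k \<omega>))" for \<omega>
  have gm: "g \<in> borel_measurable M" unfolding g_def using mtot by measurable
  have "integral\<^sup>N M g = (\<Sum>k. \<integral>\<^sup>+\<omega>. ennreal (tot k \<omega>) \<partial>M)"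
    unfolding g_def by (rule nn_integral_suminf[OF mtot])
  also have "\<dots> \<le> (\<Sum>k. ennreal (6 * eps k))"
    by (intro suminf_le inttot) auto
  also have "\<dots> = ennreal (\<Sum>k. 6 * eps k)"
    using eps0 by (intro suminf_ennreal2) (auto intro!: summable_mult simp: eps_def less_imp_le)
  finally have "integral\<^sup>N M g \<noteq> \<infinity>" using top.extremum_uniqueI by fastforce
  hence aefin: "AE \<omega> in M. g \<omega> \<noteq> \<infinity>" by (rule nn_integral_noteq_infinite[OF gm])
  show ?thesis
    using aefin AE_space
  proof eventually_elim
    case (elim \<omega>)
    hence \<omega>: "\<omega> \<in> space M" and gfin: "g \<omega> \<noteq> \<infinity>" by auto
    show ?case
    proof (intro impI)
      assume rel: "vrel E (\<sigma> \<omega>) x y \<and> vrel E (\<sigma> \<omega>) y z"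
      have tr: "vrel E (\<sigma> \<omega>) x x" "vrel E (\<sigma> \<omega>) y x" "vrel E (\<sigma> \<omega>) x z"
        "kI E (\<sigma> \<omega>) (Is k) x x = 0"
        "kI E (\<sigma> \<omega>) (Is k) x y + kI E (\<sigma> \<omega>) (Is k) y x = 0 \<or>
         kI E (\<sigma> \<omega>) (Is k) x y + kI E (\<sigma> \<omega>) (Is k) y x = card (Is k \<inter> vclass E (\<sigma> \<omega>) x)"
        "kI E (\<sigma> \<omega>) (Is k) x y + kI E (\<sigma> \<omega>) (Is k) y z = kI E (\<sigma> \<omega>) (Is k) x z \<or>
         kI E (\<sigma> \<omega>) (Is k) x y + kI E (\<sigma> \<omega>) (Is k) y z =
           kI E (\<sigma> \<omega>) (Is k) x z + card (Is k \<inter> vclass E (\<sigma> \<omega>) x)" for k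
        using triple[OF vp[OF \<omega>] Is(1,2) Is(3,4,5)] rel by auto
      have "summable (\<lambda>k. tot k \<omega>)"
        using gfin totnn unfolding g_def by (intro summable_suminf_not_top) auto
      hence tot0: "(\<lambda>k. tot k \<omega>) \<longlonglongrightarrow> 0" by (rule summable_LIMSEQ_zero)
      have L0: "(\<lambda>k. errL (Is k) \<omega>) \<longlonglongrightarrow> 0"
        by (rule squeeze0[OF Lnn _ tot0]) (simp add: tot_def sum_nonneg Dnn)
      have D0: "(\<lambda>k. errD (fst (ps ! i)) (snd (ps ! i)) (Is k) \<omega>) \<longlonglongrightarrow> 0" if "i < 5" for i
      proof (rule squeeze0[OF Dnn _ tot0])
        fix k
        have "errD (fst (ps ! i)) (snd (ps ! i)) (Is k) \<omega> \<le>
              (\<Sum>i<5. errD (fst (ps ! i)) (snd (ps ! i)) (Is k) \<omega>)"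
          using that Dnn by (intro member_le_sum) auto
        thus "errD (fst (ps ! i)) (snd (ps ! i)) (Is k) \<omega> \<le> tot k \<omega>"
          unfolding tot_def using Lnn[of "Is k" \<omega>] by linarith
      qed
      define n where "n k = real (card (Is k))" for k
      define a where "a k = real (card (Is k \<inter> vclass E (\<sigma> \<omega>) x)) / n k" for k
      define d where "d u v k = real (kI E (\<sigma> \<omega>) (Is k) u v) / n k" for u v k
      have alim: "a \<longlonglongrightarrow> lam x \<omega>"
        using L0 unfolding errL_def a_def n_def by (rule abs_lim)
      have dlim: "d u v \<longlonglongrightarrow> Delta u v \<omega>" if rl: "vrel E (\<sigma> \<omega>) u v" and inps: "(u,v) \<in> set ps" for u v
      proof -
        have lps: "length ps = 5" by (simp add: ps_def)
        obtain i where i: "i < 5" "ps ! i = (u,v)" using inps unfolding in_set_conv_nth lps by blast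
        have "(\<lambda>k. errD u v (Is k) \<omega>) \<longlonglongrightarrow> 0" using D0[OF i(1)] i(2) by simp
        thus ?thesis unfolding errD_def d_def n_def using rl by (simp add: abs_lim)
      qed
      have dxx: "d x x \<longlonglongrightarrow> Delta x x \<omega>" by (rule dlim) (use tr in \<open>auto simp: ps_def\<close>)
      have dxy: "d x y \<longlonglongrightarrow> Delta x y \<omega>" by (rule dlim) (use rel in \<open>auto simp: ps_def\<close>)
      have dyx: "d y x \<longlonglongrightarrow> Delta y x \<omega>" by (rule dlim) (use tr in \<open>auto simp: ps_def\<close>)
      have dyz: "d y z \<longlonglongrightarrow> Delta y z \<omega>" by (rule dlim) (use rel in \<open>auto simp: ps_def\<close>)
      have dxz: "d x z \<longlonglongrightarrow> Delta x z \<omega>" by (rule dlim) (use tr in \<open>auto simp: ps_def\<close>)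
      have "d x x = (\<lambda>k. 0)" using tr(4) by (auto simp: d_def)
      hence Dxx: "Delta x x \<omega> = 0" using dxx LIMSEQ_unique tendsto_const by metis
      have c1: "cong_real (lam x \<omega>) (Delta x x \<omega>) 0"
        unfolding cong_real_def Dxx by (intro exI[of _ 0]) simp
      have "\<exists>c::int. Delta x y \<omega> + Delta y x \<omega> = of_int c * lam x \<omega>"
      proof (rule prod_lim_zero[OF _ alim])
        show "(\<lambda>k. d x y k + d y x k) \<longlonglongrightarrow> Delta x y \<omega> + Delta y x \<omega>"
          using dxy dyx by (rule tendsto_add)
        fix k
        show "d x y k + d y x k = 0 \<or> d x y k + d y x k = a k"
          using tr(5)[of k] unfolding d_def a_def
          by (auto simp: add_divide_distrib[symmetric] simp flip: of_nat_add)
      qed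
      hence c2: "cong_real (lam x \<omega>) (Delta x y \<omega>) (- Delta y x \<omega>)"
        unfolding cong_real_def by simp
      have "\<exists>c::int. Delta x y \<omega> + Delta y z \<omega> - Delta x z \<omega> = of_int c * lam x \<omega>"
      proof (rule prod_lim_zero[OF _ alim])
        show "(\<lambda>k. d x y k + d y z k - d x z k) \<longlonglongrightarrow> Delta x y \<omega> + Delta y z \<omega> - Delta x z \<omega>"
          using dxy dyz dxz by (intro tendsto_intros)
        fix k
        have "real (kI E (\<sigma> \<omega>) (Is k) x y) + real (kI E (\<sigma> \<omega>) (Is k) y z) = real (kI E (\<sigma> \<omega>) (Is k) x z) \<or>
              real (kI E (\<sigma> \<omega>) (Is k) x y) + real (kI E (\<sigma> \<omega>) (Is k) y z) =
              real (kI E (\<sigma> \<omega>) (Is k) x z) + real (card (Is k \<inter> vclass E (\<sigma> \<omega>) x))"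
          using tr(6)[of k] by (metis of_nat_add)
        thus "d x y k + d y z k - d x z k = 0 \<or> d x y k + d y z k - d x z k = a k"
          unfolding d_def a_def by (auto simp: diff_divide_distrib[symmetric] add_divide_distrib[symmetric])
      qed
      hence c3: "cong_real (lam x \<omega>) (Delta x y \<omega> + Delta y z \<omega>) (Delta x z \<omega>)"
        unfolding cong_real_def by simp
      show "cong_real (lam x \<omega>) (Delta x x \<omega>) 0 \<and>
           cong_real (lam x \<omega>) (Delta x y \<omega>) (- Delta y x \<omega>) \<and>
           cong_real (lam x \<omega>) (Delta x y \<omega> + Delta y z \<omega>) (Delta x z \<omega>)"
        using c1 c2 c3 by blast
    qed
  qed
qed


end
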